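(* For any formal power series $\tau({\bf t})$ in ${\bf t}=(t_1,t_2,\dots)$ and any $n\ge1$, \[ W_n(x_1,\dots,x_n)=[\epsilon_1\cdots\epsilon_n]\Big(K_n(x_1,\dots,x_n;x_1-\epsilon_1,\dots,x_n-\epsilon_n)\Big/\det\Big(\frac1{x_i-x_j+\epsilon_j}\Big)_{i,j}\Big), \] where $[\epsilon_1\cdots\epsilon_n]$ denotes extraction of the coefficient of $\epsilon_1\cdots\epsilon_n$.
   Context: $[x]=(x,x^2/2,x^3/3,\dots)$ and $\tau(\sum_i[x_i]-\sum_i[x'_i])$ means substituting $t_l=\sum_i(x_i^l-x_i'^l)/l$. $K_n(x_1,\dots,x_n;x'_1,\dots,x'_n)=\det\big(\frac1{x_i-x'_j}\big)_{i,j}\,\tau\big(\sum_i([x_i]-[x'_i])\big)$. $\nabla(x)=\sum_{i\ge1}x^{i-1}\partial/\partial t_i$ and $W_n(x_1,\dots,x_n)=\prod_{i=1}^n\nabla(x_i)\tau({\bf t})|_{{\bf t}=0}$. *)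

theory Defs
  imports Main "HOL-Library.Poly_Mapping" "HOL-Library.Groups_Big_Fun"
begin

text \<open>
  A formal power series tau(t) in t = (t_1, t_2, ...) is represented by its coefficient
  function on monomials: a monomial t^a is a finitely supported exponent vector
  a :: nat =>0 nat, lookup a l being the exponent of t_l.  (Index 0 plays no role:
  both sides below only see t_0 = 0.)
\<close>
type_synonym 'a tseries = "(nat \<Rightarrow>\<^sub>0 nat) \<Rightarrow> 'a"

definition tderiv :: "nat \<Rightarrow> 'a::comm_semiring_1 tseries \<Rightarrow> 'a tseries" where
  "tderiv k tau = (\<lambda>a. of_nat (Poly_Mapping.lookup a k + 1) * tau (a + Poly_Mapping.single k 1))"

text \<open>
  W_n(x_1,...,x_n) = prod_i nabla(x_i) tau(t) at t = 0, with nabla(x) = sum_{i>=1} x^(i-1) d/dt_i,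
  as a formal power series in x_0,...,x_{n-1} (0-based), given by its coefficient function
  on monomials m :: nat =>0 nat in the x-variables.  The coefficient of
  x_0^(m_0) ... x_(n-1)^(m_(n-1)) is d/dt_(m_0+1) ... d/dt_(m_(n-1)+1) tau at t = 0.
\<close>
definition W :: "nat \<Rightarrow> 'a::comm_semiring_1 tseries \<Rightarrow> (nat \<Rightarrow>\<^sub>0 nat) \<Rightarrow> 'a" where
  "W n tau m =
     (if Poly_Mapping.keys m \<subseteq> {..<n}
      then foldr (\<lambda>i s. tderiv (Poly_Mapping.lookup m i + 1) s) [0..<n] tau 0
      else 0)"

text \<open>
  Polynomials (with coefficients in 'a) in the variables x_i = Inl i and eps_i = Inr i.
\<close>
type_synonym 'a xepoly = "((nat + nat) \<Rightarrow>\<^sub>0 nat) \<Rightarrow>\<^sub>0 'a"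

definition xvar :: "nat \<Rightarrow> 'a::comm_semiring_1 xepoly" where
  "xvar i = Poly_Mapping.single (Poly_Mapping.single (Inl i) 1) 1"

definition evar :: "nat \<Rightarrow> 'a::comm_semiring_1 xepoly" where
  "evar i = Poly_Mapping.single (Poly_Mapping.single (Inr i) 1) 1"

definition pconst :: "'a::comm_semiring_1 \<Rightarrow> 'a xepoly" where
  "pconst c = Poly_Mapping.single 0 c"

text \<open>
  The substituted value of t_l in tau(sum_i [x_i] - sum_i [x'_i]) with x'_i = x_i - eps_i:
  t_l = sum_i (x_i^l - x'_i^l) / l.  (For l = 0 this is 0.)
\<close>
definition tsub :: "nat \<Rightarrow> nat \<Rightarrow> 'a::field_char_0 xepoly" where
  "tsub n l = (\<Sum>i<n. (xvar i ^ l - (xvar i - evar i) ^ l) * pconst (1 / of_nat l))"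

text \<open>
  tau(sum_i ([x_i] - [x_i - eps_i])) as a formal power series in x and eps, given by its
  coefficient function: coefficient of the monomial mu is the (formal, finitely supported)
  sum over all monomials t^a of tau_a times the mu-coefficient of prod_l (t_l substituted)^(a_l).
\<close>
definition tau_subst :: "nat \<Rightarrow> 'a::field_char_0 tseries \<Rightarrow> ((nat + nat) \<Rightarrow>\<^sub>0 nat) \<Rightarrow> 'a" where
  "tau_subst n tau mu =
     Sum_any (\<lambda>a. tau a * Poly_Mapping.lookup (\<Prod>l\<in>Poly_Mapping.keys a. tsub n l ^ Poly_Mapping.lookup a l) mu)"

definition xeps_monom :: "nat \<Rightarrow> (nat \<Rightarrow>\<^sub>0 nat) \<Rightarrow> ((nat + nat) \<Rightarrow>\<^sub>0 nat)" where
  "xeps_monom n m =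
     (\<Sum>i\<in>Poly_Mapping.keys m. Poly_Mapping.single (Inl i) (Poly_Mapping.lookup m i)) + (\<Sum>i<n. Poly_Mapping.single (Inr i) 1)"

text \<open>
  Note K_n(x; x - eps) / det(1/(x_i - x_j + eps_j)) = tau(sum_i ([x_i] - [x_i - eps_i]))
  by the very definition of K_n.
\<close>
definition eps_coeff_tau_subst :: "nat \<Rightarrow> 'a::field_char_0 tseries \<Rightarrow> (nat \<Rightarrow>\<^sub>0 nat) \<Rightarrow> 'a" where
  "eps_coeff_tau_subst n tau m = tau_subst n tau (xeps_monom n m)"

end

theory Submission
  imports Defs
begin


lemma lookup_single_mult:
  fixes Z :: "('k::cancel_comm_monoid_add) \<Rightarrow>\<^sub>0 ('a::comm_semiring_1)"
  shows "Poly_Mapping.lookup (Poly_Mapping.single u c * Z) (u + w) = c * Poly_Mapping.lookup Z w"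
proof -
  have "Poly_Mapping.lookup (Poly_Mapping.single u c * Z) (u + w)
     = (\<Sum>l. (c when u = l) * (\<Sum>q. Poly_Mapping.lookup Z q when u + w = l + q))"
    by (simp add: lookup_mult lookup_single)
  also have "\<dots> = c * (\<Sum>q. Poly_Mapping.lookup Z q when u + w = u + q)"
    by (simp add: when_mult)
  also have "\<dots> = c * Poly_Mapping.lookup Z w"
    by (simp add: eq_commute[of w])
  finally show ?thesis .
qed

lemma lookup_single_mult_zero:
  fixes Z :: "('k::cancel_comm_monoid_add) \<Rightarrow>\<^sub>0 ('a::comm_semiring_1)"
  assumes "\<And>q. Poly_Mapping.lookup Z q \<noteq> 0 \<Longrightarrow> v \<noteq> u + q"
  shows "Poly_Mapping.lookup (Poly_Mapping.single u c * Z) v = 0"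
proof -
  have "Poly_Mapping.lookup (Poly_Mapping.single u c * Z) v
     = (\<Sum>l. (c when u = l) * (\<Sum>q. Poly_Mapping.lookup Z q when v = l + q))"
    by (simp add: lookup_mult lookup_single)
  also have "\<dots> = c * (\<Sum>q. Poly_Mapping.lookup Z q when v = u + q)"
    by (simp add: when_mult)
  also have "(\<lambda>q. Poly_Mapping.lookup Z q when v = u + q) = (\<lambda>q. 0)"
    by (rule ext) (use assms in \<open>auto simp: when_def\<close>)
  finally show ?thesis by simp
qed



lemma diff_pow_expand:
  fixes x e :: "'a::comm_ring_1"
  shows "\<exists>S. x^l - (x-e)^l = of_nat l * e * x^(l-1) - e^2 * S"
proof (induction l)
  case 0
  then show ?case by (intro exI[of _ 0]) simp
next
  case (Suc l)
  then obtain S where S: "x^l - (x-e)^l = of_nat l * e * x^(l-1) - e^2 * S" by blast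
  have xl: "(x-e)^l = x^l - of_nat l * e * x^(l-1) + e^2 * S" using S by (simp add: algebra_simps)
  have "x^(Suc l) - (x-e)^(Suc l) = x * x^l - (x - e) * (x-e)^l" by simp
  also have "\<dots> = x * x^l - (x - e) * (x^l - of_nat l * e * x^(l-1) + e^2 * S)" by (simp add: xl)
  also have "\<dots> = of_nat (Suc l) * e * x^l - e^2 * (x*S + of_nat l * x^(l-1) - e*S)"
  proof (cases l)
    case 0 then show ?thesis by (simp add: algebra_simps)
  next
    case (Suc k) then show ?thesis by (simp add: algebra_simps power2_eq_square)
  qed
  finally show ?case by auto
qed

lemma pow_expand:
  fixes u e w r :: "'a::comm_ring_1"
  shows "\<exists>W. (u + e*w + e^2*r)^a = u^a + of_nat a * e * w * u^(a-1) + e^2 * W"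
proof (induction a)
  case 0
  then show ?case by (intro exI[of _ 0]) simp
next
  case (Suc a)
  then obtain W where W: "(u + e*w + e^2*r)^a = u^a + of_nat a * e * w * u^(a-1) + e^2 * W" by blast
  show ?case
  proof (cases a)
    case 0 then show ?thesis by (intro exI[of _ r]) simp
  next
    case (Suc k)
    have "(u + e*w + e^2*r)^(Suc a) = (u + e*w + e^2*r) * (u^a + of_nat a * e * w * u^(a-1) + e^2 * W)"
      by (simp add: W)
    also have "\<dots> = u^(Suc a) + of_nat (Suc a) * e * w * u^(Suc a - 1) + e^2 *
       (u*W + of_nat a * w*w* u^(a-1) + e*w*W + r*u^a + e * of_nat a * r * w * u^(a-1) + e^2*r*W)"
      using Suc by (simp add: algebra_simps power2_eq_square)
    finally show ?thesis by blast
  qed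
qed

lemma prod_expand:
  fixes u w r :: "'b \<Rightarrow> 'a::comm_ring_1" and e :: 'a
  assumes "finite K"
  shows "\<exists>W. (\<Prod>l\<in>K. (u l + e*w l + e^2*r l)^(a l)) = (\<Prod>l\<in>K. u l^(a l))
     + e * (\<Sum>k\<in>K. of_nat (a k) * w k * u k^(a k - 1) * (\<Prod>l\<in>K-{k}. u l^(a l))) + e^2 * W"
  using assms
proof (induction K rule: finite_induct)
  case empty
  then show ?case by (intro exI[of _ 0]) simp
next
  case (insert k K)
  define P where "P = (\<Prod>l\<in>K. u l^(a l))"
  define S where "S = (\<Sum>k\<in>K. of_nat (a k) * w k * u k^(a k - 1) * (\<Prod>l\<in>K-{k}. u l^(a l)))"
  define A where "A = u k ^ a k"
  define B where "B = of_nat (a k) * w k * u k^(a k - 1)"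
  from insert obtain W2 where W2: "(\<Prod>l\<in>K. (u l + e*w l + e^2*r l)^(a l)) = P + e * S + e^2 * W2"
    unfolding P_def S_def by blast
  obtain W1 where W1: "(u k + e*w k + e^2*r k)^(a k) = A + e * B + e^2 * W1"
    unfolding A_def B_def using pow_expand[of "u k" e "w k" "r k" "a k"] by (auto simp: algebra_simps)
  have sum_eq: "(\<Sum>j\<in>insert k K. of_nat (a j) * w j * u j^(a j - 1) * (\<Prod>l\<in>insert k K-{j}. u l^(a l)))
      = B * P + A * S"
  proof -
    have "(\<Sum>j\<in>insert k K. of_nat (a j) * w j * u j^(a j - 1) * (\<Prod>l\<in>insert k K-{j}. u l^(a l)))
       = B * (\<Prod>l\<in>insert k K-{k}. u l^(a l)) + (\<Sum>j\<in>K. of_nat (a j) * w j * u j^(a j - 1) * (\<Prod>l\<in>insert k K-{j}. u l^(a l)))"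
      using insert by (simp add: B_def)
    also have "(\<Prod>l\<in>insert k K-{k}. u l^(a l)) = P" using insert by (simp add: P_def)
    also have "(\<Sum>j\<in>K. of_nat (a j) * w j * u j^(a j - 1) * (\<Prod>l\<in>insert k K-{j}. u l^(a l)))
       = (\<Sum>j\<in>K. A * (of_nat (a j) * w j * u j^(a j - 1) * (\<Prod>l\<in>K-{j}. u l^(a l))))"
    proof (rule sum.cong[OF refl])
      fix j assume j: "j \<in> K"
      have "insert k K - {j} = insert k (K - {j})" using j insert by auto
      then have "(\<Prod>l\<in>insert k K-{j}. u l^(a l)) = A * (\<Prod>l\<in>K-{j}. u l^(a l))"
        using insert by (simp add: A_def)
      then show "of_nat (a j) * w j * u j^(a j - 1) * (\<Prod>l\<in>insert k K-{j}. u l^(a l))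
          = A * (of_nat (a j) * w j * u j^(a j - 1) * (\<Prod>l\<in>K-{j}. u l^(a l)))"
        by (simp add: algebra_simps)
    qed
    also have "\<dots> = A * S" by (simp add: S_def sum_distrib_left)
    finally show ?thesis .
  qed
  have "(\<Prod>l\<in>insert k K. (u l + e*w l + e^2*r l)^(a l))
     = (A + e * B + e^2 * W1) * (P + e * S + e^2 * W2)"
    using insert by (simp add: W1 W2)
  also have "\<dots> = A * P + e * (B * P + A * S) + e^2 * (A*W2 + B*S + e*B*W2 + W1*P + e*W1*S + e^2*W1*W2)"
    by (simp add: algebra_simps power2_eq_square)
  also have "A * P = (\<Prod>l\<in>insert k K. u l^(a l))" using insert by (simp add: A_def P_def)
  finally show ?case unfolding sum_eq[symmetric] by blast
qed



definition avoids :: "nat \<Rightarrow> 'a::comm_ring_1 xepoly \<Rightarrow> bool" where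
  "avoids n p \<longleftrightarrow> (\<forall>v. Poly_Mapping.lookup p v \<noteq> 0 \<longrightarrow>
      Poly_Mapping.lookup v (Inl n) = 0 \<and> Poly_Mapping.lookup v (Inr n) = 0)"

lemma avoids_add:
  assumes "avoids n p" "avoids n q" shows "avoids n (p + q)"
  unfolding avoids_def
proof (intro allI impI)
  fix v assume "Poly_Mapping.lookup (p + q) v \<noteq> 0"
  then have "Poly_Mapping.lookup p v \<noteq> 0 \<or> Poly_Mapping.lookup q v \<noteq> 0" by (auto simp: lookup_add)
  then show "Poly_Mapping.lookup v (Inl n) = 0 \<and> Poly_Mapping.lookup v (Inr n) = 0"
    using assms unfolding avoids_def by blast
qed

lemma avoids_diff:
  assumes "avoids n p" "avoids n q" shows "avoids n (p - q)"
  unfolding avoids_def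
proof (intro allI impI)
  fix v assume "Poly_Mapping.lookup (p - q) v \<noteq> 0"
  then have "Poly_Mapping.lookup p v \<noteq> 0 \<or> Poly_Mapping.lookup q v \<noteq> 0" by (auto simp: lookup_minus)
  then show "Poly_Mapping.lookup v (Inl n) = 0 \<and> Poly_Mapping.lookup v (Inr n) = 0"
    using assms unfolding avoids_def by blast
qed

lemma avoids_zero: "avoids n 0"
  by (simp add: avoids_def)

lemma avoids_mult:
  assumes "avoids n p" "avoids n q" shows "avoids n (p * q)"
  unfolding avoids_def
proof (intro allI impI)
  fix v assume "Poly_Mapping.lookup (p * q) v \<noteq> 0"
  then have "v \<in> Poly_Mapping.keys (p * q)" by (simp add: in_keys_iff)
  then obtain a b where "v = a + b" "a \<in> Poly_Mapping.keys p" "b \<in> Poly_Mapping.keys q"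
    using keys_mult by blast
  then show "Poly_Mapping.lookup v (Inl n) = 0 \<and> Poly_Mapping.lookup v (Inr n) = 0"
  proof -
    have "Poly_Mapping.lookup p a \<noteq> 0" "Poly_Mapping.lookup q b \<noteq> 0"
      using \<open>a \<in> Poly_Mapping.keys p\<close> \<open>b \<in> Poly_Mapping.keys q\<close> by (auto simp: in_keys_iff)
    then have "Poly_Mapping.lookup a (Inl n) = 0 \<and> Poly_Mapping.lookup a (Inr n) = 0"
      "Poly_Mapping.lookup b (Inl n) = 0 \<and> Poly_Mapping.lookup b (Inr n) = 0"
      using assms unfolding avoids_def by blast+
    then show ?thesis using \<open>v = a + b\<close> by (simp add: lookup_add)
  qed
qed

lemma avoids_single0: "avoids n (Poly_Mapping.single 0 c)"
  unfolding avoids_def by (auto simp: lookup_single when_def)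

lemma avoids_one: "avoids n 1"
  using avoids_single0[of n 1] by simp

lemma avoids_power: "avoids n p \<Longrightarrow> avoids n (p ^ k)"
  by (induction k) (auto intro: avoids_mult avoids_one)

lemma avoids_prod: "(\<And>l. l \<in> K \<Longrightarrow> avoids n (f l)) \<Longrightarrow> avoids n (\<Prod>l\<in>K. f l)"
  by (induction K rule: infinite_finite_induct) (auto intro: avoids_mult avoids_one)

lemma avoids_sum: "(\<And>l. l \<in> K \<Longrightarrow> avoids n (f l)) \<Longrightarrow> avoids n (\<Sum>l\<in>K. f l)"
  by (induction K rule: infinite_finite_induct) (auto intro: avoids_add avoids_zero)

lemma avoids_xvar: "i \<noteq> n \<Longrightarrow> avoids n (xvar i)"
  unfolding avoids_def xvar_def by (auto simp: lookup_single when_def)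

lemma avoids_evar: "i \<noteq> n \<Longrightarrow> avoids n (evar i)"
  unfolding avoids_def evar_def by (auto simp: lookup_single when_def)

lemma avoids_pconst: "avoids n (pconst c)"
  unfolding pconst_def by (rule avoids_single0)

lemma avoids_tsub: "avoids n (tsub n l)"
  unfolding tsub_def
  by (intro avoids_sum avoids_mult avoids_diff avoids_power avoids_xvar avoids_evar avoids_pconst) auto



lemma tsub_Suc: "tsub (Suc n) l = tsub n l + (xvar n ^ l - (xvar n - evar n) ^ l) * pconst (1 / of_nat l)"
  unfolding tsub_def by simp

lemma xvar_power: "xvar n ^ p = Poly_Mapping.single (Poly_Mapping.single (Inl n) p) 1"
  by (induction p) (auto simp: xvar_def mult_single single_add[symmetric] add.commute)

lemma evar_sq: "evar n ^ 2 = Poly_Mapping.single (Poly_Mapping.single (Inr n) 2) 1"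
  by (simp add: evar_def power2_eq_square mult_single single_add[symmetric] numeral_2_eq_2)

lemma evar_xvar: "evar n * xvar n ^ p =
   Poly_Mapping.single (Poly_Mapping.single (Inr n) 1 + Poly_Mapping.single (Inl n) p) 1"
  by (simp add: evar_def xvar_power mult_single)

definition wfun :: "nat \<Rightarrow> nat \<Rightarrow> 'a::comm_ring_1 xepoly" where
  "wfun n l = (if l = 0 then 0 else xvar n ^ (l - 1))"

lemma y_expand:
  "\<exists>r. ((xvar n ^ l - (xvar n - evar n) ^ l) * pconst (1 / of_nat l) :: 'a::field_char_0 xepoly)
      = evar n * wfun n l + (evar n)^2 * r"
proof (cases "l = 0")
  case True then show ?thesis by (intro exI[of _ 0]) (simp add: wfun_def)
next
  case False
  obtain S where S: "(xvar n ^ l - (xvar n - evar n) ^ l :: 'a xepoly)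
     = of_nat l * evar n * xvar n^(l-1) - (evar n)^2 * S"
    using diff_pow_expand by blast
  have c: "(of_nat l :: 'a xepoly) * pconst (1 / of_nat l) = 1"
    using False by (simp add: pconst_def single_of_nat[symmetric] mult_single del: single_of_nat)
  have "(xvar n ^ l - (xvar n - evar n) ^ l) * pconst (1 / of_nat l)
     = evar n * xvar n^(l-1) * (of_nat l * pconst (1 / of_nat l)) + (evar n)^2 * (- S * pconst (1 / of_nat l))"
    by (simp add: S algebra_simps)
  also have "\<dots> = evar n * wfun n l + (evar n)^2 * (- S * pconst (1 / of_nat l))"
    using False by (simp add: c wfun_def)
  finally show ?thesis by blast
qed

lemma lookup_xeps_Inl: "Poly_Mapping.lookup (xeps_monom n m) (Inl i) = Poly_Mapping.lookup m i"
proof -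
  have "Poly_Mapping.lookup (xeps_monom n m) (Inl i) =
     (\<Sum>j\<in>Poly_Mapping.keys m. (Poly_Mapping.lookup m j when Inl j = (Inl i :: nat + nat)))"
    by (simp add: xeps_monom_def lookup_add lookup_sum lookup_single)
  also have "\<dots> = (\<Sum>j\<in>Poly_Mapping.keys m. (if j = i then Poly_Mapping.lookup m j else 0))"
    by (rule sum.cong) (auto simp: when_def)
  also have "\<dots> = Poly_Mapping.lookup m i"
    by (simp add: in_keys_iff)
  finally show ?thesis .
qed

lemma lookup_xeps_Inr: "Poly_Mapping.lookup (xeps_monom n m) (Inr i) = (if i < n then 1 else 0)"
proof -
  have "Poly_Mapping.lookup (xeps_monom n m) (Inr i) =
     (\<Sum>j<n. (1 when Inr j = (Inr i :: nat + nat)))"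
    by (simp add: xeps_monom_def lookup_add lookup_sum lookup_single when_def)
  also have "\<dots> = (\<Sum>j<n. (if j = i then 1 else 0))"
    by (rule sum.cong) (auto simp: when_def)
  finally show ?thesis by simp
qed

lemma xeps_Suc:
  "xeps_monom (Suc n) m = Poly_Mapping.single (Inr n) 1 + Poly_Mapping.single (Inl n) (Poly_Mapping.lookup m n)
     + xeps_monom n (Poly_Mapping.update n 0 m)"
proof (rule poly_mapping_eqI)
  fix v :: "nat + nat"
  show "Poly_Mapping.lookup (xeps_monom (Suc n) m) v = Poly_Mapping.lookup (Poly_Mapping.single (Inr n) 1
     + Poly_Mapping.single (Inl n) (Poly_Mapping.lookup m n) + xeps_monom n (Poly_Mapping.update n 0 m)) v"
    by (cases v) (auto simp: lookup_add lookup_single lookup_xeps_Inl lookup_xeps_Inr lookup_update when_def)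
qed



definition pp :: "(nat \<Rightarrow>\<^sub>0 nat) \<Rightarrow> (nat \<Rightarrow> 'a::comm_ring_1 xepoly) \<Rightarrow> 'a xepoly" where
  "pp a f = (\<Prod>l\<in>Poly_Mapping.keys a. f l ^ Poly_Mapping.lookup a l)"

lemma pp_superset:
  "finite K \<Longrightarrow> Poly_Mapping.keys a \<subseteq> K \<Longrightarrow> pp a f = (\<Prod>l\<in>K. f l ^ Poly_Mapping.lookup a l)"
  unfolding pp_def by (rule prod.mono_neutral_left) (auto simp: in_keys_iff)

lemma lookup_ofnat_mult:
  "Poly_Mapping.lookup (of_nat c * (Z :: 'a::comm_ring_1 xepoly)) w = of_nat c * Poly_Mapping.lookup Z w"
  using lookup_single_mult[of 0 "of_nat c" Z w] by simp

lemma avoids_of_nat: "avoids n (of_nat c)"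
  using avoids_single0[of n "of_nat c"] by simp

lemma coef_Suc:
  fixes a m :: "nat \<Rightarrow>\<^sub>0 nat" and n :: nat
  defines "k \<equiv> Poly_Mapping.lookup m n + 1"
  defines "K \<equiv> insert k (Poly_Mapping.keys a)"
  shows "Poly_Mapping.lookup (pp a (tsub (Suc n)) :: 'a::field_char_0 xepoly) (xeps_monom (Suc n) m)
    = of_nat (Poly_Mapping.lookup a k) * Poly_Mapping.lookup
        (tsub n k ^ (Poly_Mapping.lookup a k - 1) * (\<Prod>l\<in>K-{k}. tsub n l ^ Poly_Mapping.lookup a l))
        (xeps_monom n (Poly_Mapping.update n 0 m))"
proof -
  let ?u = "tsub n :: nat \<Rightarrow> 'a xepoly"
  let ?E = "evar n :: 'a xepoly"
  let ?mu = "xeps_monom (Suc n) m"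
  define j where "j = Poly_Mapping.lookup m n"
  define mu' where "mu' = xeps_monom n (Poly_Mapping.update n 0 m)"
  have mu: "?mu = Poly_Mapping.single (Inr n) 1 + Poly_Mapping.single (Inl n) j + mu'"
    using xeps_Suc unfolding j_def mu'_def .
  have mu'0: "Poly_Mapping.lookup mu' (Inl n) = 0" "Poly_Mapping.lookup mu' (Inr n) = 0"
    by (simp_all add: mu'_def lookup_xeps_Inl lookup_xeps_Inr lookup_update)
  have "\<forall>l. \<exists>r. ((xvar n ^ l - (xvar n - evar n) ^ l) * pconst (1 / of_nat l) :: 'a xepoly)
      = ?E * wfun n l + ?E^2 * r"
    using y_expand by blast
  then obtain r where r: "\<And>l. ((xvar n ^ l - (xvar n - evar n) ^ l) * pconst (1 / of_nat l) :: 'a xepoly)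
      = ?E * wfun n l + ?E^2 * r l"
    by metis
  have fin: "finite K" by (simp add: K_def)
  have kK: "k \<in> K" by (simp add: K_def)
  have "pp a (tsub (Suc n)) = (\<Prod>l\<in>K. tsub (Suc n) l ^ Poly_Mapping.lookup a l)"
    by (rule pp_superset) (auto simp: K_def)
  also have "\<dots> = (\<Prod>l\<in>K. (?u l + ?E * wfun n l + ?E^2 * r l) ^ Poly_Mapping.lookup a l)"
    by (simp add: tsub_Suc r add.assoc)
  finally have pe: "pp a (tsub (Suc n)) = (\<Prod>l\<in>K. (?u l + ?E * wfun n l + ?E^2 * r l) ^ Poly_Mapping.lookup a l)" .
  define Z where "Z k' = ?u k'^(Poly_Mapping.lookup a k' - 1) * (\<Prod>l\<in>K-{k'}. ?u l^(Poly_Mapping.lookup a l))" for k'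
  obtain W where W: "(\<Prod>l\<in>K. (?u l + ?E * wfun n l + ?E^2 * r l) ^ Poly_Mapping.lookup a l)
     = (\<Prod>l\<in>K. ?u l ^ Poly_Mapping.lookup a l)
       + ?E * (\<Sum>k'\<in>K. of_nat (Poly_Mapping.lookup a k') * wfun n k' * Z k') + ?E^2 * W"
    using prod_expand[OF fin, of ?u ?E "wfun n" r "Poly_Mapping.lookup a"] unfolding Z_def
    by (auto simp: mult.assoc)
  have Zav: "avoids n (of_nat c * Z k')" for c k'
    unfolding Z_def by (intro avoids_mult avoids_power avoids_prod avoids_tsub avoids_of_nat)
  have t1: "Poly_Mapping.lookup (\<Prod>l\<in>K. ?u l ^ Poly_Mapping.lookup a l) ?mu = 0"
  proof (rule ccontr)
    assume "Poly_Mapping.lookup (\<Prod>l\<in>K. ?u l ^ Poly_Mapping.lookup a l) ?mu \<noteq> 0"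
    moreover have "avoids n (\<Prod>l\<in>K. ?u l ^ Poly_Mapping.lookup a l)"
      by (intro avoids_prod avoids_power avoids_tsub)
    ultimately have "Poly_Mapping.lookup ?mu (Inr n) = 0" unfolding avoids_def by blast
    then show False by (simp add: lookup_xeps_Inr)
  qed
  have t2: "Poly_Mapping.lookup (?E^2 * W) ?mu = 0"
    unfolding evar_sq
  proof (rule lookup_single_mult_zero)
    fix q assume "Poly_Mapping.lookup W q \<noteq> 0"
    show "?mu \<noteq> Poly_Mapping.single (Inr n) 2 + q"
    proof
      assume "?mu = Poly_Mapping.single (Inr n) 2 + q"
      then have "Poly_Mapping.lookup ?mu (Inr n) = Poly_Mapping.lookup (Poly_Mapping.single (Inr n) 2 + q) (Inr n)"
        by simp
      then show False by (simp add: lookup_xeps_Inr lookup_add)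
    qed
  qed
  have hterm: "Poly_Mapping.lookup (?E * (wfun n k' * (of_nat (Poly_Mapping.lookup a k') * Z k'))) ?mu
      = (if k' = k then of_nat (Poly_Mapping.lookup a k) * Poly_Mapping.lookup (Z k) mu' else 0)" for k'
  proof (cases "k' = 0")
    case True
    then show ?thesis by (simp add: wfun_def k_def)
  next
    case False
    define Y where "Y = of_nat (Poly_Mapping.lookup a k') * Z k'"
    have YA: "avoids n Y" unfolding Y_def by (rule Zav)
    have eq: "?E * (wfun n k' * Y) = Poly_Mapping.single
        (Poly_Mapping.single (Inr n) 1 + Poly_Mapping.single (Inl n) (k' - 1)) 1 * Y"
    proof -
      have "?E * (wfun n k' * Y) = (?E * xvar n ^ (k' - 1)) * Y" using False by (simp add: wfun_def mult.assoc)
      also have "\<dots> = Poly_Mapping.single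
        (Poly_Mapping.single (Inr n) 1 + Poly_Mapping.single (Inl n) (k' - 1)) 1 * Y" by (simp only: evar_xvar)
      finally show ?thesis .
    qed
    show ?thesis
    proof (cases "k' = k")
      case True
      then have "k' - 1 = j" by (simp add: k_def j_def)
      then have "?mu = (Poly_Mapping.single (Inr n) 1 + Poly_Mapping.single (Inl n) (k' - 1)) + mu'"
        by (simp add: mu)
      then show ?thesis unfolding Y_def[symmetric] eq using True
        by (simp add: lookup_single_mult Y_def lookup_ofnat_mult)
    next
      case nk: False
      have "Poly_Mapping.lookup (Poly_Mapping.single
        (Poly_Mapping.single (Inr n) 1 + Poly_Mapping.single (Inl n) (k' - 1)) 1 * Y) ?mu = 0"
      proof (rule lookup_single_mult_zero)
        fix q assume "Poly_Mapping.lookup Y q \<noteq> 0"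
        then have q0: "Poly_Mapping.lookup q (Inl n) = 0" using YA unfolding avoids_def by blast
        show "?mu \<noteq> Poly_Mapping.single (Inr n) 1 + Poly_Mapping.single (Inl n) (k' - 1) + q"
        proof
          assume "?mu = Poly_Mapping.single (Inr n) 1 + Poly_Mapping.single (Inl n) (k' - 1) + q"
          then have "Poly_Mapping.lookup ?mu (Inl n) = Poly_Mapping.lookup (Poly_Mapping.single (Inr n) 1 + Poly_Mapping.single (Inl n) (k' - 1) + q) (Inl n)"
            by simp
          then have "Poly_Mapping.lookup m n = k' - 1" by (simp add: lookup_xeps_Inl lookup_add q0 lookup_single)
          then show False using nk False by (simp add: k_def)
        qed
      qed
      then show ?thesis unfolding Y_def[symmetric] eq using nk by simp
    qed
  qed
  have t3: "Poly_Mapping.lookup (?E * (\<Sum>k'\<in>K. of_nat (Poly_Mapping.lookup a k') * wfun n k' * Z k')) ?mu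
      = of_nat (Poly_Mapping.lookup a k) * Poly_Mapping.lookup (Z k) mu'"
  proof -
    have "?E * (\<Sum>k'\<in>K. of_nat (Poly_Mapping.lookup a k') * wfun n k' * Z k')
        = (\<Sum>k'\<in>K. ?E * (wfun n k' * (of_nat (Poly_Mapping.lookup a k') * Z k')))"
      by (simp add: sum_distrib_left algebra_simps)
    then have "Poly_Mapping.lookup (?E * (\<Sum>k'\<in>K. of_nat (Poly_Mapping.lookup a k') * wfun n k' * Z k')) ?mu
      = (\<Sum>k'\<in>K. (if k' = k then of_nat (Poly_Mapping.lookup a k) * Poly_Mapping.lookup (Z k) mu' else 0))"
      by (simp add: lookup_sum hterm)
    also have "\<dots> = of_nat (Poly_Mapping.lookup a k) * Poly_Mapping.lookup (Z k) mu'"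
      using fin kK by simp
    finally show ?thesis .
  qed
  have "Poly_Mapping.lookup (pp a (tsub (Suc n))) ?mu = of_nat (Poly_Mapping.lookup a k) * Poly_Mapping.lookup (Z k) mu'"
    unfolding pe W by (simp add: lookup_add t1 t2 t3)
  then show ?thesis by (simp add: Z_def mu'_def)
qed

lemma coef_zero:
  assumes "Poly_Mapping.lookup a (Poly_Mapping.lookup m n + 1) = 0"
  shows "Poly_Mapping.lookup (pp a (tsub (Suc n)) :: 'a::field_char_0 xepoly) (xeps_monom (Suc n) m) = 0"
  using coef_Suc[of a n m] assms by simp

lemma coef_shift:
  fixes b m :: "nat \<Rightarrow>\<^sub>0 nat" and n :: nat
  defines "k \<equiv> Poly_Mapping.lookup m n + 1"
  shows "Poly_Mapping.lookup (pp (b + Poly_Mapping.single k 1) (tsub (Suc n)) :: 'a::field_char_0 xepoly) (xeps_monom (Suc n) m)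
    = of_nat (Poly_Mapping.lookup b k + 1) * Poly_Mapping.lookup (pp b (tsub n)) (xeps_monom n (Poly_Mapping.update n 0 m))"
proof -
  define a where "a = b + Poly_Mapping.single k 1"
  define K where "K = insert k (Poly_Mapping.keys a)"
  have ak: "Poly_Mapping.lookup a k = Poly_Mapping.lookup b k + 1" by (simp add: a_def lookup_add)
  have al: "l \<noteq> k \<Longrightarrow> Poly_Mapping.lookup a l = Poly_Mapping.lookup b l" for l
    by (simp add: a_def lookup_add lookup_single when_def)
  have fin: "finite K" by (simp add: K_def)
  have kK: "k \<in> K" by (simp add: K_def)
  have sub: "Poly_Mapping.keys b \<subseteq> K"
    by (auto simp: K_def a_def in_keys_iff lookup_add)
  have "pp b (tsub n :: nat \<Rightarrow> 'a xepoly) = (\<Prod>l\<in>K. tsub n l ^ Poly_Mapping.lookup b l)"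
    by (rule pp_superset[OF fin sub])
  also have "\<dots> = tsub n k ^ Poly_Mapping.lookup b k * (\<Prod>l\<in>K-{k}. tsub n l ^ Poly_Mapping.lookup b l)"
    using fin kK by (simp add: prod.remove)
  also have "(\<Prod>l\<in>K-{k}. tsub n l ^ Poly_Mapping.lookup b l) = (\<Prod>l\<in>K-{k}. tsub n l ^ Poly_Mapping.lookup a l)"
    by (rule prod.cong) (auto simp: al)
  finally have ppb: "pp b (tsub n :: nat \<Rightarrow> 'a xepoly) = tsub n k ^ (Poly_Mapping.lookup a k - 1) * (\<Prod>l\<in>K-{k}. tsub n l ^ Poly_Mapping.lookup a l)"
    by (simp add: ak)
  show ?thesis
    using coef_Suc[of a n m] unfolding a_def[symmetric] k_def[symmetric] K_def[symmetric]
    by (simp add: ppb ak)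
qed

lemma Sum_any_shift:
  fixes f :: "(nat \<Rightarrow>\<^sub>0 nat) \<Rightarrow> 'a::comm_monoid_add"
  assumes "\<And>a. Poly_Mapping.lookup a k = 0 \<Longrightarrow> f a = 0"
  shows "Sum_any f = Sum_any (\<lambda>b. f (b + Poly_Mapping.single k 1))"
proof -
  let ?g = "\<lambda>b. b + Poly_Mapping.single k (1::nat)"
  have inj: "inj_on ?g A" for A by (rule inj_onI) simp
  have img: "{a. f a \<noteq> 0} = ?g ` {b. f (?g b) \<noteq> 0}"
  proof
    show "{a. f a \<noteq> 0} \<subseteq> ?g ` {b. f (?g b) \<noteq> 0}"
    proof
      fix a assume "a \<in> {a. f a \<noteq> 0}"
      then have fa: "f a \<noteq> 0" by simp
      then have ak: "Poly_Mapping.lookup a k \<noteq> 0" using assms by blast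
      have aeq: "a = ?g (a - Poly_Mapping.single k 1)"
        by (rule poly_mapping_eqI) (use ak in \<open>auto simp: lookup_add lookup_minus lookup_single when_def\<close>)
      show "a \<in> ?g ` {b. f (?g b) \<noteq> 0}"
        using fa aeq by (metis (mono_tags, lifting) image_eqI mem_Collect_eq)
    qed
  qed auto
  show ?thesis
    unfolding Sum_any.expand_set img by (subst sum.reindex[OF inj]) (simp add: comp_def)
qed

lemma rhs_Suc:
  fixes tau :: "'a::field_char_0 tseries"
  shows "eps_coeff_tau_subst (Suc n) tau m
    = eps_coeff_tau_subst n (tderiv (Poly_Mapping.lookup m n + 1) tau) (Poly_Mapping.update n 0 m)"
proof -
  have "eps_coeff_tau_subst (Suc n) tau m
     = Sum_any (\<lambda>a. tau a * Poly_Mapping.lookup (pp a (tsub (Suc n))) (xeps_monom (Suc n) m))"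
    by (simp add: eps_coeff_tau_subst_def tau_subst_def pp_def)
  also have "\<dots> = Sum_any (\<lambda>b. tau (b + Poly_Mapping.single (Poly_Mapping.lookup m n + 1) 1)
      * Poly_Mapping.lookup (pp (b + Poly_Mapping.single (Poly_Mapping.lookup m n + 1) 1) (tsub (Suc n))) (xeps_monom (Suc n) m))"
    by (rule Sum_any_shift) (simp add: coef_zero)
  also have "\<dots> = Sum_any (\<lambda>b. tderiv (Poly_Mapping.lookup m n + 1) tau b
      * Poly_Mapping.lookup (pp b (tsub n)) (xeps_monom n (Poly_Mapping.update n 0 m)))"
    unfolding coef_shift tderiv_def by (simp add: algebra_simps)
  also have "\<dots> = eps_coeff_tau_subst n (tderiv (Poly_Mapping.lookup m n + 1) tau) (Poly_Mapping.update n 0 m)"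
    by (simp add: eps_coeff_tau_subst_def tau_subst_def pp_def)
  finally show ?thesis .
qed

lemma W_Suc:
  "W (Suc n) tau m = W n (tderiv (Poly_Mapping.lookup m n + 1) tau) (Poly_Mapping.update n 0 m)"
proof -
  have keq: "Poly_Mapping.keys (Poly_Mapping.update n 0 m) \<subseteq> {..<n} \<longleftrightarrow> Poly_Mapping.keys m \<subseteq> {..<Suc n}"
    by (auto simp: keys_update)
  have feq: "List.foldr (\<lambda>i. tderiv (Poly_Mapping.lookup m i + 1)) [0..<Suc n] tau
     = List.foldr (\<lambda>i. tderiv (Poly_Mapping.lookup (Poly_Mapping.update n 0 m) i + 1)) [0..<n]
         (tderiv (Poly_Mapping.lookup m n + 1) tau)"
  proof -
    have "List.foldr (\<lambda>i. tderiv (Poly_Mapping.lookup m i + 1)) [0..<Suc n] tau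
      = List.foldr (\<lambda>i. tderiv (Poly_Mapping.lookup m i + 1)) [0..<n] (tderiv (Poly_Mapping.lookup m n + 1) tau)"
      by simp
    also have "List.foldr (\<lambda>i. tderiv (Poly_Mapping.lookup m i + 1)) [0..<n] (tderiv (Poly_Mapping.lookup m n + 1) tau)
       = List.foldr (\<lambda>i. tderiv (Poly_Mapping.lookup (Poly_Mapping.update n 0 m) i + 1)) [0..<n] (tderiv (Poly_Mapping.lookup m n + 1) tau)"
      by (rule foldr_cong) (auto simp: lookup_update)
    finally show ?thesis .
  qed
  show ?thesis unfolding W_def keq feq by simp
qed

lemma base0:
  fixes tau :: "'a::field_char_0 tseries"
  shows "W 0 tau m = eps_coeff_tau_subst 0 tau m"
proof -
  have pp0: "pp a (tsub 0 :: nat \<Rightarrow> 'a xepoly) = (if a = 0 then 1 else 0)" for a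
  proof (cases "a = 0")
    case True then show ?thesis by (simp add: pp_def)
  next
    case False
    then obtain l where "l \<in> Poly_Mapping.keys a" by (metis keys_eq_empty ex_in_conv)
    then have "(\<Prod>l\<in>Poly_Mapping.keys a. (tsub 0 l :: 'a xepoly) ^ Poly_Mapping.lookup a l) = 0"
      by (intro prod_zero) (auto simp: tsub_def in_keys_iff power_0_left intro!: bexI[of _ l])
    then show ?thesis using False unfolding pp_def by simp
  qed
  have xe: "xeps_monom 0 m = 0 \<longleftrightarrow> m = 0"
  proof
    assume h: "xeps_monom 0 m = 0"
    show "m = 0"
    proof (rule poly_mapping_eqI)
      fix i
      have "Poly_Mapping.lookup (xeps_monom 0 m) (Inl i) = 0" using h by simp
      then show "Poly_Mapping.lookup m i = Poly_Mapping.lookup 0 i" by (simp add: lookup_xeps_Inl)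
    qed
  qed (simp add: xeps_monom_def)
  have "eps_coeff_tau_subst 0 tau m = Sum_any (\<lambda>a. (tau a * Poly_Mapping.lookup 1 (xeps_monom 0 m)) when a = 0)"
    unfolding eps_coeff_tau_subst_def tau_subst_def pp_def[symmetric]
    by (rule Sum_any.cong) (simp add: pp0 when_def)
  also have "\<dots> = tau 0 * Poly_Mapping.lookup 1 (xeps_monom 0 m)" by simp
  finally show ?thesis by (simp add: W_def lookup_one xe when_def)
qed

theorem proposition4p10:
  fixes tau :: "'a::field_char_0 tseries" and n :: nat
  assumes "n \<ge> 1"
  shows "W n tau = eps_coeff_tau_subst n tau"
proof -
  have "W n tau' m = eps_coeff_tau_subst n tau' m" for tau' :: "'a tseries" and m
    by (induction n arbitrary: tau' m) (simp_all add: base0 W_Suc rhs_Suc)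
  then show ?thesis by (simp add: fun_eq_iff)
qed

end
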